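(* Let $f:[a,b]\to\mathbb{C}$ be continuous and write $f=g+ih$ with $g,h:[a,b]\to\mathbb{R}$ its real and imaginary parts. If $h$ is Lipschitz, then $$\dim_P(G(f))=\dim_P(G(g)),\quad \overline{\dim}_B(G(f))=\overline{\dim}_B(G(g)),\quad \underline{\dim}_B(G(f))=\underline{\dim}_B(G(g)).$$
   Context: For a function $u$ on $[a,b]$, $G(u)=\{(x,u(x)):x\in[a,b]\}$ denotes its graph; for complex-valued $u$ the graph is regarded as a subset of $\mathbb{R}\times\mathbb{C}\cong\mathbb{R}^3$ with the Euclidean metric, for real-valued $u$ as a subset of $\mathbb{R}^2$. $\dim_P$ is packing dimension, $\overline{\dim}_B$ and $\underline{\dim}_B$ are upper and lower box dimension. *)

theory Defs
  imports "HOL-Analysis.Analysis"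
begin

definition graph_on :: "real set \<Rightarrow> (real \<Rightarrow> 'b) \<Rightarrow> (real \<times> 'b) set" where
  "graph_on S u = (\<lambda>x. (x, u x)) ` S"

text \<open>Covering number N_delta(F): least number of sets of diameter at most delta covering F
  (meaningful for bounded F).\<close>
definition cover_num :: "'a::metric_space set \<Rightarrow> real \<Rightarrow> nat" where
  "cover_num F \<delta> = Inf {card C | C. finite C \<and> (\<forall>U\<in>C. bounded U \<and> diameter U \<le> \<delta>) \<and> F \<subseteq> \<Union>C}"

definition upper_box_dim :: "'a::metric_space set \<Rightarrow> ereal" where
  "upper_box_dim F = Limsup (at_right 0) (\<lambda>\<delta>. ereal (ln (real (cover_num F \<delta>)) / - ln \<delta>))"

definition lower_box_dim :: "'a::metric_space set \<Rightarrow> ereal" where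
  "lower_box_dim F = Liminf (at_right 0) (\<lambda>\<delta>. ereal (ln (real (cover_num F \<delta>)) / - ln \<delta>))"

definition packing_delta :: "real \<Rightarrow> real \<Rightarrow> 'a::metric_space set \<Rightarrow> ennreal" where
  "packing_delta s \<delta> F = (SUP P \<in> {P. countable P \<and> (\<forall>(x,r)\<in>P. x \<in> F \<and> 0 < r \<and> r \<le> \<delta>)
        \<and> disjoint_family_on (\<lambda>(x,r). cball x r) P}.
      (\<Sum>\<^sub>\<infinity>(x,r)\<in>P. ennreal ((2 * r) powr s)))"

definition packing_pre :: "real \<Rightarrow> 'a::metric_space set \<Rightarrow> ennreal" where
  "packing_pre s F = (INF \<delta> \<in> {0<..}. packing_delta s \<delta> F)"

definition packing_measure :: "real \<Rightarrow> 'a::metric_space set \<Rightarrow> ennreal" where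
  "packing_measure s F = (INF A \<in> {A :: nat \<Rightarrow> 'a set. F \<subseteq> (\<Union>i. A i)}. (\<Sum>i. packing_pre s (A i)))"

definition packing_dim :: "'a::metric_space set \<Rightarrow> ereal" where
  "packing_dim F = Sup ({0} \<union> {ereal s | s. 0 \<le> s \<and> packing_measure s F = \<infinity>})"

end

theory Submission
  imports Defs
begin

lemma pd_mono:
  assumes "F1 \<subseteq> F2"
  shows "packing_delta s \<delta> F1 \<le> packing_delta s \<delta> F2"
  unfolding packing_delta_def
  by (rule SUP_subset_mono) (use assms in auto)

lemma pre_mono:
  assumes "F1 \<subseteq> F2"
  shows "packing_pre s F1 \<le> packing_pre s F2"
  unfolding packing_pre_def
  by (rule INF_mono) (use pd_mono[OF assms] in auto)

lemma cball_disj_dist: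
  fixes x y :: "'b::real_normed_vector"
  assumes "cball x r \<inter> cball y t = {}" "0 < r" "0 < t"
  shows "dist x y > r + t"
proof (rule ccontr)
  assume "\<not> dist x y > r + t"
  hence d: "dist x y \<le> r + t" by simp
  define c where "c = r / (r + t)"
  define z where "z = x + c *\<^sub>R (y - x)"
  have c0: "0 \<le> c" "c \<le> 1" using assms by (auto simp: c_def)
  have "dist x z = c * dist x y"
    by (simp add: z_def dist_norm c0 norm_minus_commute)
  also have "\<dots> \<le> c * (r + t)" using d c0 by (simp add: mult_left_mono)
  also have "\<dots> = r" using assms by (simp add: c_def)
  finally have z1: "z \<in> cball x r" by simp
  have "y - z = (1 - c) *\<^sub>R (y - x)" by (simp add: z_def algebra_simps)
  hence "dist y z = (1 - c) * dist x y"
    using c0 by (simp add: dist_norm norm_minus_commute)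
  also have "\<dots> \<le> (1 - c) * (r + t)" using d c0 by (simp add: mult_left_mono)
  also have "\<dots> = t" using assms by (simp add: c_def field_simps)
  finally have z2: "z \<in> cball y t" by simp
  show False using z1 z2 assms(1) by blast
qed

lemma infsum_cmult_ennreal:
  fixes f :: "'c \<Rightarrow> ennreal"
  shows "infsum (\<lambda>x. c * f x) A = c * infsum f A"
proof -
  have "infsum (\<lambda>x. c * f x) A = (SUP F\<in>{F. finite F \<and> F\<subseteq>A}. sum (\<lambda>x. c * f x) F)"
    by (rule nonneg_infsum_complete) simp
  also have "\<dots> = (SUP F\<in>{F. finite F \<and> F\<subseteq>A}. c * sum f F)"
    by (simp add: sum_distrib_left)
  also have "\<dots> = c * (SUP F\<in>{F. finite F \<and> F\<subseteq>A}. sum f F)"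
    by (simp add: SUP_mult_left_ennreal)
  also have "\<dots> = c * infsum f A"
    by (subst nonneg_infsum_complete[of A f]) simp_all
  finally show ?thesis .
qed

lemma pd_lip:
  fixes \<Phi> :: "'a::metric_space \<Rightarrow> 'b::real_normed_vector"
  assumes K: "K > 0" and lip: "\<And>x y. x \<in> F \<Longrightarrow> y \<in> F \<Longrightarrow> dist (\<Phi> x) (\<Phi> y) \<le> K * dist x y"
  shows "packing_delta s \<delta> (\<Phi> ` F) \<le> ennreal (K powr s) * packing_delta s (\<delta> / K) F"
  unfolding packing_delta_def
proof (rule SUP_least)
  fix P assume "P \<in> {P. countable P \<and> (\<forall>(x,r)\<in>P. x \<in> \<Phi> ` F \<and> 0 < r \<and> r \<le> \<delta>)
        \<and> disjoint_family_on (\<lambda>(x,r). cball x r) P}"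
  hence cP: "countable P" and inP: "\<And>x r. (x,r) \<in> P \<Longrightarrow> x \<in> \<Phi> ` F \<and> 0 < r \<and> r \<le> \<delta>"
    and dP: "disjoint_family_on (\<lambda>(x,r). cball x r) P" by auto
  define \<psi> where "\<psi> = inv_into F \<Phi>"
  define h where "h = (\<lambda>(x::'b, r::real). (\<psi> x, r / K))"
  define P' where "P' = h ` P"
  have \<psi>F: "\<psi> x \<in> F" "\<Phi> (\<psi> x) = x" if "x \<in> \<Phi> ` F" for x
    using that by (auto simp: \<psi>_def inv_into_into f_inv_into_f)
  have injh: "inj_on h P"
  proof (rule inj_onI)
    fix p q assume pq: "p \<in> P" "q \<in> P" "h p = h q"
    obtain x r where p: "p = (x, r)" by fastforce
    obtain y t where q: "q = (y, t)" by fastforce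
    have "\<psi> x = \<psi> y" "r / K = t / K" using pq by (auto simp: h_def p q)
    have "x \<in> \<Phi> ` F" "y \<in> \<Phi> ` F" using inP pq(1,2) p q by blast+
    hence "x = y" using \<psi>F \<open>\<psi> x = \<psi> y\<close> by metis
    moreover have "r = t" using \<open>r / K = t / K\<close> K by simp
    ultimately show "p = q" by (simp add: p q)
  qed
  have adm: "P' \<in> {P. countable P \<and> (\<forall>(x,r)\<in>P. x \<in> F \<and> 0 < r \<and> r \<le> \<delta> / K)
        \<and> disjoint_family_on (\<lambda>(x,r). cball x r) P}"
  proof (intro CollectI conjI)
    show "countable P'" using cP by (simp add: P'_def)
    show "\<forall>(x,r)\<in>P'. x \<in> F \<and> 0 < r \<and> r \<le> \<delta> / K"
    proof (clarsimp simp: P'_def h_def)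
      fix x r assume "(x, r) \<in> P"
      thus "\<psi> x \<in> F \<and> 0 < r / K \<and> r / K \<le> \<delta> / K"
        using inP[of x r] \<psi>F[of x] K by (simp add: divide_right_mono)
    qed
    show "disjoint_family_on (\<lambda>(x,r). cball x r) P'"
      unfolding disjoint_family_on_def
    proof (intro ballI impI)
      fix m n assume mn: "m \<in> P'" "n \<in> P'" "m \<noteq> n"
      then obtain x r y t where xr: "(x,r) \<in> P" "m = h (x,r)" and yt: "(y,t) \<in> P" "n = h (y,t)"
        by (auto simp: P'_def)
      have ne: "(x,r) \<noteq> (y,t)" using mn xr yt by auto
      have "cball x r \<inter> cball y t = {}"
        using dP xr(1) yt(1) ne unfolding disjoint_family_on_def by fastforce
      hence d1: "dist x y > r + t" using cball_disj_dist inP xr(1) yt(1) by blast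
      have "dist x y \<le> K * dist (\<psi> x) (\<psi> y)"
        using lip[of "\<psi> x" "\<psi> y"] \<psi>F inP xr(1) yt(1) by metis
      hence "r / K + t / K < dist (\<psi> x) (\<psi> y)"
        using d1 K by (simp add: field_simps)
      hence "cball (\<psi> x) (r / K) \<inter> cball (\<psi> y) (t / K) = {}"
        by (rule disjoint_cballI)
      thus "(\<lambda>(x,r). cball x r) m \<inter> (\<lambda>(x,r). cball x r) n = {}"
        by (simp add: xr yt h_def)
    qed
  qed
  have eq: "(\<Sum>\<^sub>\<infinity>(x,r)\<in>P. ennreal ((2 * r) powr s))
      = ennreal (K powr s) * (\<Sum>\<^sub>\<infinity>(x,r)\<in>P'. ennreal ((2 * r) powr s))"
  proof -
    have "(\<Sum>\<^sub>\<infinity>(x,r)\<in>P'. ennreal ((2 * r) powr s))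
        = (\<Sum>\<^sub>\<infinity>p\<in>P. ((\<lambda>(x,r). ennreal ((2 * r) powr s)) \<circ> h) p)"
      unfolding P'_def by (rule infsum_reindex[OF injh])
    hence "ennreal (K powr s) * (\<Sum>\<^sub>\<infinity>(x,r)\<in>P'. ennreal ((2 * r) powr s))
        = (\<Sum>\<^sub>\<infinity>p\<in>P. ennreal (K powr s) * ((\<lambda>(x,r). ennreal ((2 * r) powr s)) \<circ> h) p)"
      using infsum_cmult_ennreal[where c="ennreal (K powr s)" and f="(\<lambda>(x,r). ennreal ((2 * r) powr s)) \<circ> h" and A=P]
      by (simp add: o_def)
    also have "\<dots> = (\<Sum>\<^sub>\<infinity>(x,r)\<in>P. ennreal ((2 * r) powr s))"
    proof (rule infsum_cong)
      fix p assume "p \<in> P"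
      then obtain x r where p: "p = (x,r)" and r: "0 < r" using inP by (cases p) auto
      have "K powr s * (2 * (r / K)) powr s = (K * (2 * (r / K))) powr s"
        using K r by (subst powr_mult[symmetric]) auto
      also have "K * (2 * (r / K)) = 2 * r" using K by simp
      finally show "ennreal (K powr s) * ((\<lambda>(x,r). ennreal ((2 * r) powr s)) \<circ> h) p
          = (\<lambda>(x,r). ennreal ((2 * r) powr s)) p"
        by (simp add: p h_def ennreal_mult[symmetric])
    qed
    finally show ?thesis by simp
  qed
  show "(\<Sum>\<^sub>\<infinity>(x,r)\<in>P. ennreal ((2 * r) powr s)) \<le> ennreal (K powr s) *
      (SUP P \<in> {P. countable P \<and> (\<forall>(x,r)\<in>P. x \<in> F \<and> 0 < r \<and> r \<le> \<delta> / K)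
        \<and> disjoint_family_on (\<lambda>(x,r). cball x r) P}. (\<Sum>\<^sub>\<infinity>(x,r)\<in>P. ennreal ((2 * r) powr s)))"
    unfolding eq by (intro mult_left_mono SUP_upper[OF adm]) simp
qed

lemma pre_lip:
  fixes \<Phi> :: "'a::metric_space \<Rightarrow> 'b::real_normed_vector"
  assumes K: "K > 0" and lip: "\<And>x y. x \<in> F \<Longrightarrow> y \<in> F \<Longrightarrow> dist (\<Phi> x) (\<Phi> y) \<le> K * dist x y"
  shows "packing_pre s (\<Phi> ` F) \<le> ennreal (K powr s) * packing_pre s F"
proof -
  let ?c = "ennreal (K powr s)"
  have c0: "0 < ?c" using K by simp
  have "packing_pre s (\<Phi> ` F) / ?c \<le> packing_pre s F"
    unfolding packing_pre_def[of s F]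
  proof (rule INF_greatest)
    fix \<delta> :: real assume "\<delta> \<in> {0<..}"
    hence d: "\<delta> > 0" by simp
    have "packing_pre s (\<Phi> ` F) \<le> packing_delta s (K * \<delta>) (\<Phi> ` F)"
      unfolding packing_pre_def by (rule INF_lower) (use d K in simp)
    also have "\<dots> \<le> ?c * packing_delta s (K * \<delta> / K) F"
      by (rule pd_lip[OF K lip])
    also have "K * \<delta> / K = \<delta>" using K by simp
    finally show "packing_pre s (\<Phi> ` F) / ?c \<le> packing_delta s \<delta> F"
      by (intro divide_le_posI_ennreal c0)
  qed
  hence "packing_pre s (\<Phi> ` F) / ?c * ?c \<le> packing_pre s F * ?c"
    by (rule mult_right_mono) simp
  moreover have "packing_pre s (\<Phi> ` F) / ?c * ?c = packing_pre s (\<Phi> ` F)"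
    using K by (simp add: ennreal_divide_times)
  ultimately show ?thesis by (simp add: mult.commute)
qed

lemma pm_lip:
  fixes \<Phi> :: "'a::metric_space \<Rightarrow> 'b::real_normed_vector"
  assumes K: "K > 0" and lip: "\<And>x y. x \<in> F \<Longrightarrow> y \<in> F \<Longrightarrow> dist (\<Phi> x) (\<Phi> y) \<le> K * dist x y"
    and fin: "packing_measure s F < top"
  shows "packing_measure s (\<Phi> ` F) < top"
proof -
  let ?c = "ennreal (K powr s)"
  obtain A where A: "F \<subseteq> (\<Union>i. A i)" and As: "(\<Sum>i. packing_pre s (A i)) < top"
    using fin unfolding packing_measure_def by (auto simp: INF_less_iff)
  define B where "B i = \<Phi> ` (A i \<inter> F)" for i
  have cov: "\<Phi> ` F \<subseteq> (\<Union>i. B i)"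
  proof
    fix y assume "y \<in> \<Phi> ` F"
    then obtain x where x: "x \<in> F" "y = \<Phi> x" by blast
    then obtain i where "x \<in> A i" using A by blast
    hence "y \<in> B i" using x by (auto simp: B_def)
    thus "y \<in> (\<Union>i. B i)" by blast
  qed
  have "packing_measure s (\<Phi> ` F) \<le> (\<Sum>i. packing_pre s (B i))"
    unfolding packing_measure_def by (rule INF_lower) (use cov in simp)
  also have "\<dots> \<le> (\<Sum>i. ?c * packing_pre s (A i))"
  proof (rule suminf_le)
    fix i
    have "packing_pre s (B i) \<le> ?c * packing_pre s (A i \<inter> F)"
      unfolding B_def by (rule pre_lip[OF K]) (use lip in auto)
    also have "\<dots> \<le> ?c * packing_pre s (A i)"
      by (intro mult_left_mono pre_mono) auto
    finally show "packing_pre s (B i) \<le> ?c * packing_pre s (A i)" .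
  qed simp_all
  also have "\<dots> = ?c * (\<Sum>i. packing_pre s (A i))" by (rule ennreal_suminf_cmult)
  also have "\<dots> < top" using As by (simp add: ennreal_mult_less_top)
  finally show ?thesis .
qed

lemma pdim_lip:
  fixes \<Phi> :: "'a::metric_space \<Rightarrow> 'b::real_normed_vector"
  assumes K: "K > 0" and lip: "\<And>x y. x \<in> F \<Longrightarrow> y \<in> F \<Longrightarrow> dist (\<Phi> x) (\<Phi> y) \<le> K * dist x y"
  shows "packing_dim (\<Phi> ` F) \<le> packing_dim F"
proof -
  have h: "packing_measure s F = \<infinity>" if "packing_measure s (\<Phi> ` F) = \<infinity>" for s
    using pm_lip[OF K lip, where s=s] that by (metis infinity_ennreal_def top.not_eq_extremum)
  show ?thesis unfolding packing_dim_def
    by (rule Sup_subset_mono) (use h in blast)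
qed

lemma cover_set_ne:
  fixes F :: "'a::euclidean_space set"
  assumes "compact F" "\<delta> > 0"
  shows "{card C | C. finite C \<and> (\<forall>U\<in>C. bounded U \<and> diameter U \<le> \<delta>) \<and> F \<subseteq> \<Union>C} \<noteq> {}"
proof -
  obtain k where k: "finite k" "F \<subseteq> (\<Union>x\<in>k. ball x (\<delta>/2))"
    using assms compact_eq_totally_bounded[of F] by (meson half_gt_zero)
  define C where "C = (\<lambda>x. ball x (\<delta>/2)) ` k"
  have "finite C \<and> (\<forall>U\<in>C. bounded U \<and> diameter U \<le> \<delta>) \<and> F \<subseteq> \<Union>C"
    using k assms(2) by (auto simp: C_def)
  thus ?thesis by blast
qed

lemma cover_lip:
  fixes \<Phi> :: "'a::euclidean_space \<Rightarrow> 'b::euclidean_space"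
  assumes K: "K > 0" and lip: "\<And>x y. x \<in> F \<Longrightarrow> y \<in> F \<Longrightarrow> dist (\<Phi> x) (\<Phi> y) \<le> K * dist x y"
    and cF: "compact F" and d: "\<delta> > 0"
  shows "cover_num (\<Phi> ` F) \<delta> \<le> cover_num F (\<delta> / K)"
proof -
  let ?S = "{card C | C. finite C \<and> (\<forall>U\<in>C. bounded U \<and> diameter U \<le> \<delta> / K) \<and> F \<subseteq> \<Union>C}"
  have "?S \<noteq> {}" by (rule cover_set_ne[OF cF]) (use K d in simp)
  hence "Inf ?S \<in> ?S" by (rule Inf_nat_def1)
  then obtain C where C: "cover_num F (\<delta> / K) = card C" "finite C"
    "\<And>U. U \<in> C \<Longrightarrow> bounded U \<and> diameter U \<le> \<delta> / K" "F \<subseteq> \<Union>C"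
    unfolding cover_num_def by blast
  define C' where "C' = (\<lambda>U. \<Phi> ` (U \<inter> F)) ` C"
  have cardC': "card C' \<le> card C" unfolding C'_def by (rule card_image_le[OF C(2)])
  have bnd: "bounded V \<and> diameter V \<le> \<delta>" if "V \<in> C'" for V
  proof -
    obtain U where U: "U \<in> C" "V = \<Phi> ` (U \<inter> F)" using \<open>V \<in> C'\<close> by (auto simp: C'_def)
    have dU: "dist u v \<le> diameter U" if "u \<in> U" "v \<in> U" for u v
      using diameter_bounded_bound[of U u v] C(3)[OF U(1)] that by blast
    have pt: "dist (\<Phi> u) (\<Phi> v) \<le> \<delta>" if "u \<in> U \<inter> F" "v \<in> U \<inter> F" for u v
    proof -
      have "dist (\<Phi> u) (\<Phi> v) \<le> K * dist u v" using lip that by blast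
      also have "\<dots> \<le> K * diameter U" using dU that K by (intro mult_left_mono) auto
      also have "\<dots> \<le> K * (\<delta> / K)" using C(3)[OF U(1)] K by (intro mult_left_mono) auto
      also have "\<dots> = \<delta>" using K by simp
      finally show ?thesis .
    qed
    have "bounded V"
    proof (cases "U \<inter> F = {}")
      case True thus ?thesis using U by simp
    next
      case False
      then obtain x0 where x0: "x0 \<in> U \<inter> F" by blast
      show ?thesis unfolding bounded_def
        using pt[OF x0] U(2) by blast
    qed
    moreover have "diameter V \<le> \<delta>"
      by (rule diameter_le) (use d pt U(2) in \<open>auto simp: dist_norm\<close>)
    ultimately show ?thesis by blast
  qed
  have cov: "\<Phi> ` F \<subseteq> \<Union>C'"
  proof
    fix y assume "y \<in> \<Phi> ` F"
    then obtain x where x: "x \<in> F" "y = \<Phi> x" by blast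
    then obtain U where "U \<in> C" "x \<in> U" using C(4) by blast
    thus "y \<in> \<Union>C'" using x by (auto simp: C'_def)
  qed
  have "card C' \<in> {card C | C. finite C \<and> (\<forall>U\<in>C. bounded U \<and> diameter U \<le> \<delta>) \<and> \<Phi> ` F \<subseteq> \<Union>C}"
    using bnd cov C(2) by (auto simp: C'_def)
  hence "cover_num (\<Phi> ` F) \<delta> \<le> card C'"
    unfolding cover_num_def by (intro cInf_lower) auto
  thus ?thesis using cardC' C(1) by simp
qed

lemma ereal_eps_le:
  fixes X Y :: ereal
  assumes h: "\<And>e. e > 0 \<Longrightarrow> X \<le> ereal (1 + e) * Y"
  shows "X \<le> Y"
proof (cases Y)
  case PInf thus ?thesis by simp
next
  case MInf thus ?thesis using h[of 1] by simp
next
  case (real y)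
  note Y = real
  show ?thesis
  proof (cases X)
    case PInf thus ?thesis using h[of 1] Y by simp
  next
    case MInf thus ?thesis by simp
  next
    case (real x)
    note X = real
    have hx: "x \<le> (1 + e) * y" if "e > 0" for e using h[OF that] X Y by simp
    have "x \<le> y"
    proof (rule ccontr)
      assume "\<not> x \<le> y"
      hence xy: "x > y" by simp
      show False
      proof (cases "y \<le> 0")
        case True
        have "x \<le> 2 * y" using hx[OF zero_less_one] by simp
        thus False using True xy by linarith
      next
        case False
        define e where "e = (x - y) / (2 * y)"
        have e0: "e > 0" using False xy by (simp add: e_def)
        have "(1 + e) * y = y + (x - y) / 2" using False by (simp add: e_def field_simps)
        hence "x \<le> y + (x - y) / 2" using hx[OF e0] by simp
        thus False using xy by (simp add: field_simps)
      qed
    qed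
    thus ?thesis using X Y by simp
  qed
qed

lemma box_eventually:
  fixes NE NF :: "real \<Rightarrow> nat"
  assumes K: "K \<ge> 1" and N: "\<And>\<delta>. \<delta> > 0 \<Longrightarrow> NE \<delta> \<le> NF (\<delta> / K)" and e: "e > 0"
  shows "eventually (\<lambda>\<delta>. ereal (ln (real (NE \<delta>)) / - ln \<delta>)
     \<le> ereal (1 + e) * ereal (ln (real (NF (inverse K * \<delta>))) / - ln (inverse K * \<delta>))) (at_right 0)"
  unfolding eventually_at_right_field
proof (intro exI[of _ "min 1 (exp (- ln K / e))"] conjI allI impI)
  show "(0::real) < min 1 (exp (- ln K / e))" by simp
  fix \<delta> :: real assume d0: "\<delta> > 0" and d1: "\<delta> < min 1 (exp (- ln K / e))"
  have iK: "inverse K * \<delta> = \<delta> / K" by (simp add: field_simps)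
  define A where "A = ln (real (NF (\<delta> / K)))"
  define B where "B = ln (real (NE \<delta>))"
  define x where "x = - ln \<delta>"
  define y where "y = - ln (\<delta> / K)"
  have A0: "A \<ge> 0" unfolding A_def by (cases "NF (\<delta> / K) = 0") auto
  have BA: "B \<le> A"
  proof (cases "NE \<delta> = 0")
    case True thus ?thesis using A0 by (simp add: B_def)
  next
    case False thus ?thesis using N[OF d0] by (simp add: A_def B_def)
  qed
  have x0: "x > 0" using d0 d1 by (simp add: x_def)
  have yx: "y = x + ln K" using d0 K by (simp add: x_def y_def ln_div)
  have "\<delta> < exp (- ln K / e)" using d1 by simp
  hence "ln \<delta> < ln (exp (- ln K / e))" using d0 by (subst ln_less_cancel_iff) auto
  hence "ln \<delta> < - ln K / e" by simp
  hence "ln K < e * x" using e by (simp add: x_def field_simps)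
  hence y1: "y \<le> (1 + e) * x" using yx by (simp add: algebra_simps)
  have y0: "y > 0" using yx x0 ln_ge_zero[OF K] by simp
  have "B / x \<le> A / x" using BA x0 by (simp add: divide_right_mono)
  also have "A / x \<le> (1 + e) * (A / y)"
  proof -
    have "A * y \<le> A * ((1 + e) * x)" using y1 A0 by (rule mult_left_mono)
    thus ?thesis using x0 y0 by (simp add: field_simps)
  qed
  finally have "B / x \<le> (1 + e) * (A / y)" .
  thus "ereal (ln (real (NE \<delta>)) / - ln \<delta>)
     \<le> ereal (1 + e) * ereal (ln (real (NF (inverse K * \<delta>))) / - ln (inverse K * \<delta>))"
    by (simp add: iK A_def B_def x_def y_def)
qed

lemma box_compare:
  fixes NE NF :: "real \<Rightarrow> nat"
  assumes K: "K \<ge> 1" and N: "\<And>\<delta>. \<delta> > 0 \<Longrightarrow> NE \<delta> \<le> NF (\<delta> / K)"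
  shows "Limsup (at_right 0) (\<lambda>\<delta>. ereal (ln (real (NE \<delta>)) / - ln \<delta>))
      \<le> Limsup (at_right 0) (\<lambda>\<delta>. ereal (ln (real (NF \<delta>)) / - ln \<delta>))"
    and "Liminf (at_right 0) (\<lambda>\<delta>. ereal (ln (real (NE \<delta>)) / - ln \<delta>))
      \<le> Liminf (at_right 0) (\<lambda>\<delta>. ereal (ln (real (NF \<delta>)) / - ln \<delta>))"
proof -
  define u where "u = (\<lambda>\<delta>. ereal (ln (real (NE \<delta>)) / - ln \<delta>))"
  define v where "v = (\<lambda>\<delta>. ereal (ln (real (NF \<delta>)) / - ln \<delta>))"
  have fm: "filtermap (times (inverse K)) (at_right 0) = at_right (0::real)"
    using filtermap_times_pos_at_right[of "inverse K" 0] K by simp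
  have inj: "inj (times (inverse K) :: real \<Rightarrow> real)" using K by (auto intro: injI)
  have ls: "Limsup (at_right 0) (\<lambda>\<delta>. v (inverse K * \<delta>)) = Limsup (at_right 0) v"
    using Limsup_filtermap_eq[OF inj, of "at_right 0" v] fm by simp
  have li: "Liminf (at_right 0) (\<lambda>\<delta>. v (inverse K * \<delta>)) = Liminf (at_right 0) v"
    using Liminf_filtermap_eq[OF inj, of "at_right 0" v] fm by simp
  have ev: "eventually (\<lambda>\<delta>. u \<delta> \<le> ereal (1 + e) * v (inverse K * \<delta>)) (at_right 0)" if "e > 0" for e
    using box_eventually[where NE=NE and NF=NF, OF K N that] unfolding u_def v_def by simp
  have nb: "at_right (0::real) \<noteq> bot" by simp
  show "Limsup (at_right 0) u \<le> Limsup (at_right 0) v" unfolding u_def[symmetric] v_def[symmetric]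
  proof (rule ereal_eps_le)
    fix e :: real assume e: "e > 0"
    have "Limsup (at_right 0) u \<le> Limsup (at_right 0) (\<lambda>\<delta>. ereal (1 + e) * v (inverse K * \<delta>))"
      by (rule Limsup_mono[OF ev[OF e]])
    also have "\<dots> = ereal (1 + e) * Limsup (at_right 0) v"
      using Limsup_ereal_mult_left[OF nb, of "1 + e" "\<lambda>\<delta>. v (inverse K * \<delta>)"] e ls by simp
    finally show "Limsup (at_right 0) u \<le> ereal (1 + e) * Limsup (at_right 0) v" .
  qed
  show "Liminf (at_right 0) u \<le> Liminf (at_right 0) v" unfolding u_def[symmetric] v_def[symmetric]
  proof (rule ereal_eps_le)
    fix e :: real assume e: "e > 0"
    have "Liminf (at_right 0) u \<le> Liminf (at_right 0) (\<lambda>\<delta>. ereal (1 + e) * v (inverse K * \<delta>))"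
      by (rule Liminf_mono[OF ev[OF e]])
    also have "\<dots> = ereal (1 + e) * Liminf (at_right 0) v"
      using Liminf_ereal_mult_left[OF nb, of "1 + e" "\<lambda>\<delta>. v (inverse K * \<delta>)"] e li by simp
    finally show "Liminf (at_right 0) u \<le> ereal (1 + e) * Liminf (at_right 0) v" .
  qed
qed

theorem mainTheorem3:
  fixes f :: "real \<Rightarrow> complex" and a b :: real
  assumes "continuous_on {a..b} f"
    and "\<exists>L. L-lipschitz_on {a..b} (\<lambda>x. Im (f x))"
  shows "packing_dim (graph_on {a..b} f) = packing_dim (graph_on {a..b} (\<lambda>x. Re (f x)))
    \<and> upper_box_dim (graph_on {a..b} f) = upper_box_dim (graph_on {a..b} (\<lambda>x. Re (f x)))
    \<and> lower_box_dim (graph_on {a..b} f) = lower_box_dim (graph_on {a..b} (\<lambda>x. Re (f x)))"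
proof -
  obtain L where L: "L-lipschitz_on {a..b} (\<lambda>x. Im (f x))" using assms(2) by blast
  define F where "F = graph_on {a..b} (\<lambda>x. Re (f x))"
  define E where "E = graph_on {a..b} f"
  define \<Phi> where "\<Phi> = (\<lambda>p::real\<times>real. (fst p, f (fst p)))"
  define \<Psi> where "\<Psi> = (\<lambda>p::real\<times>complex. (fst p, Re (snd p)))"
  define K where "K = sqrt (1 + L\<^sup>2)"
  have K1: "K \<ge> 1" unfolding K_def by simp
  have EF: "E = \<Phi> ` F" by (simp add: E_def F_def graph_on_def \<Phi>_def image_image)
  have FE: "F = \<Psi> ` E" by (simp add: E_def F_def graph_on_def \<Psi>_def image_image)
  have cF: "compact F" unfolding F_def graph_on_def
    by (intro compact_continuous_image continuous_intros assms(1)) simp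
  have cE: "compact E" unfolding E_def graph_on_def
    by (intro compact_continuous_image continuous_intros assms(1)) simp
  have lipPhi: "dist (\<Phi> p) (\<Phi> q) \<le> K * dist p q" if pF: "p \<in> F" and qF: "q \<in> F" for p q
  proof -
    obtain x where x: "x \<in> {a..b}" "p = (x, Re (f x))" using pF unfolding F_def graph_on_def by blast
    obtain y where y: "y \<in> {a..b}" "q = (y, Re (f y))" using qF unfolding F_def graph_on_def by blast
    have hL: "\<bar>Im (f x) - Im (f y)\<bar> \<le> L * \<bar>x - y\<bar>"
      using L x(1) y(1) unfolding lipschitz_on_def by (auto simp: dist_real_def)
    have L0: "L \<ge> 0" using L unfolding lipschitz_on_def by simp
    have "(Im (f x) - Im (f y))\<^sup>2 \<le> (L * \<bar>x - y\<bar>)\<^sup>2"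
      using hL by (metis abs_ge_zero power2_abs power_mono)
    hence hL2: "(Im (f x) - Im (f y))\<^sup>2 \<le> L\<^sup>2 * (x - y)\<^sup>2" by (simp add: power_mult_distrib)
    have cm: "(cmod (f x - f y))\<^sup>2 = (Re (f x) - Re (f y))\<^sup>2 + (Im (f x) - Im (f y))\<^sup>2"
      by (simp add: cmod_power2)
    have "(dist (\<Phi> p) (\<Phi> q))\<^sup>2 = (x - y)\<^sup>2 + (cmod (f x - f y))\<^sup>2"
      by (simp add: x y \<Phi>_def dist_norm norm_Pair)
    also have "\<dots> \<le> (1 + L\<^sup>2) * ((x - y)\<^sup>2 + (Re (f x) - Re (f y))\<^sup>2)"
      using hL2 cm by (simp add: algebra_simps) (smt (verit) mult_nonneg_nonneg zero_le_power2)
    also have "\<dots> = (K * dist p q)\<^sup>2"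
      by (simp add: K_def x y dist_Pair_Pair dist_real_def power_mult_distrib)
    finally have "(dist (\<Phi> p) (\<Phi> q))\<^sup>2 \<le> (K * dist p q)\<^sup>2" .
    thus ?thesis by (rule power2_le_imp_le) (use K1 in simp)
  qed
  have lipPsi: "dist (\<Psi> p) (\<Psi> q) \<le> 1 * dist p q" for p q
  proof -
    obtain x u where p: "p = (x, u)" by fastforce
    obtain y w where q: "q = (y, w)" by fastforce
    have "\<bar>Re u - Re w\<bar> \<le> cmod (u - w)" by (metis abs_Re_le_cmod minus_complex.sel(1))
    hence "(Re u - Re w)\<^sup>2 \<le> (cmod (u - w))\<^sup>2" by (metis abs_ge_zero power2_abs power_mono)
    thus ?thesis
      by (simp add: p q \<Psi>_def dist_norm norm_Pair)
  qed
  have K0: "K > 0" using K1 by simp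
  have pd: "packing_dim E = packing_dim F"
    using pdim_lip[OF K0 lipPhi, of F] pdim_lip[OF zero_less_one lipPsi, of E] EF FE
    by (metis order_antisym)
  have c1: "cover_num E \<delta> \<le> cover_num F (\<delta> / K)" if "\<delta> > 0" for \<delta>
    using cover_lip[OF K0 lipPhi cF that] EF by simp
  have c2: "cover_num F \<delta> \<le> cover_num E (\<delta> / 1)" if "\<delta> > 0" for \<delta>
    using cover_lip[OF zero_less_one lipPsi cE that] FE by simp
  note b1 = box_compare[where NE="cover_num E" and NF="cover_num F", OF K1 c1]
  note b2 = box_compare[where NE="cover_num F" and NF="cover_num E", OF order_refl c2]
  have "upper_box_dim E = upper_box_dim F"
    unfolding upper_box_dim_def using b1(1) b2(1) by (rule order_antisym)
  moreover have "lower_box_dim E = lower_box_dim F"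
    unfolding lower_box_dim_def using b1(2) b2(2) by (rule order_antisym)
  ultimately show ?thesis using pd by (simp add: E_def F_def)
qed

end
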